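(* Let $X$ be a two-sided quaternionic Banach space, $T\in\mathcal{B}(X)$ and $n$ a positive integer. Then for every $s\in\mathbb{H}$ with $|s|>r_S(T)$, the series below converges in operator norm and $$S_L^{-n}(s,T)=\sum_{m=0}^{\infty}\binom{m+n-1}{n-1}T^m s^{-(m+n)},$$ where $S_L^{-n}(s,T)=Q_s(T)^{-n}\sum_{m=0}^{n}\binom{n}{m}(-T)^m\overline{s}^{\,n-m}$.
   Context: $\mathbb{H}$ denotes the real algebra of quaternions; for $s\in\mathbb{H}$, $\overline{s}$ is its conjugate, $\mathrm{Re}(s)$ its real part and $|s|$ its modulus. $X$ is a two-sided vector space over $\mathbb{H}$ which is a Banach space; $\mathcal{B}(X)$ is the algebra of bounded right $\mathbb{H}$-linear operators on $X$, with identity $\mathcal{I}$ and operator norm; for operators and quaternions, $(sT)(v)=s(Tv)$ and $(Ts)(v)=T(sv)$. For $s\in\mathbb{H}$ put $Q_s(T)=T^2-2\mathrm{Re}(s)T+|s|^2\mathcal{I}$. The $S$-resolvent set is $\rho_S(T)=\{s\in\mathbb{H}: Q_s(T)\text{ invertible in }\mathcal{B}(X)\}$, the $S$-spectrum is $\sigma_S(T)=\mathbb{H}\setminus\rho_S(T)$, and the $S$-spectral radius is $r_S(T)=\sup\{|s|: s\in\sigma_S(T)\}$ (so every $s$ with $|s|>r_S(T)$ lies in $\rho_S(T)$). *)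

theory Defs
  imports "HOL-Analysis.Analysis"
begin

codatatype quat = Quat (qRe: real) (qIm1: real) (qIm2: real) (qIm3: real)

lemma quat_eq_iff: "x = y \<longleftrightarrow> qRe x = qRe y \<and> qIm1 x = qIm1 y \<and> qIm2 x = qIm2 y \<and> qIm3 x = qIm3 y"
  by (auto intro: quat.expand)

lemmas quat_eqI = quat.expand

instantiation quat :: real_vector
begin
primcorec zero_quat where "qRe 0 = 0" | "qIm1 0 = 0" | "qIm2 0 = 0" | "qIm3 0 = 0"
primcorec plus_quat where
  "qRe (x + y) = qRe x + qRe y" | "qIm1 (x + y) = qIm1 x + qIm1 y"
| "qIm2 (x + y) = qIm2 x + qIm2 y" | "qIm3 (x + y) = qIm3 x + qIm3 y"
primcorec uminus_quat where
  "qRe (- x) = - qRe x" | "qIm1 (- x) = - qIm1 x" | "qIm2 (- x) = - qIm2 x" | "qIm3 (- x) = - qIm3 x"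
primcorec minus_quat where
  "qRe (x - y) = qRe x - qRe y" | "qIm1 (x - y) = qIm1 x - qIm1 y"
| "qIm2 (x - y) = qIm2 x - qIm2 y" | "qIm3 (x - y) = qIm3 x - qIm3 y"
primcorec scaleR_quat where
  "qRe (scaleR r x) = r * qRe x" | "qIm1 (scaleR r x) = r * qIm1 x"
| "qIm2 (scaleR r x) = r * qIm2 x" | "qIm3 (scaleR r x) = r * qIm3 x"
instance by standard (auto intro!: quat_eqI simp: algebra_simps)
end

instantiation quat :: "{real_algebra_1, inverse}"
begin
primcorec one_quat where "qRe 1 = 1" | "qIm1 1 = 0" | "qIm2 1 = 0" | "qIm3 1 = 0"
primcorec times_quat where
  "qRe (a * b) = qRe a * qRe b - qIm1 a * qIm1 b - qIm2 a * qIm2 b - qIm3 a * qIm3 b"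
| "qIm1 (a * b) = qRe a * qIm1 b + qIm1 a * qRe b + qIm2 a * qIm3 b - qIm3 a * qIm2 b"
| "qIm2 (a * b) = qRe a * qIm2 b - qIm1 a * qIm3 b + qIm2 a * qRe b + qIm3 a * qIm1 b"
| "qIm3 (a * b) = qRe a * qIm3 b + qIm1 a * qIm2 b - qIm2 a * qIm1 b + qIm3 a * qRe b"
primcorec inverse_quat where
  "qRe (inverse a) = qRe a / ((qRe a)\<^sup>2 + (qIm1 a)\<^sup>2 + (qIm2 a)\<^sup>2 + (qIm3 a)\<^sup>2)"
| "qIm1 (inverse a) = - qIm1 a / ((qRe a)\<^sup>2 + (qIm1 a)\<^sup>2 + (qIm2 a)\<^sup>2 + (qIm3 a)\<^sup>2)"
| "qIm2 (inverse a) = - qIm2 a / ((qRe a)\<^sup>2 + (qIm1 a)\<^sup>2 + (qIm2 a)\<^sup>2 + (qIm3 a)\<^sup>2)"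
| "qIm3 (inverse a) = - qIm3 a / ((qRe a)\<^sup>2 + (qIm1 a)\<^sup>2 + (qIm2 a)\<^sup>2 + (qIm3 a)\<^sup>2)"
definition divide_quat :: "quat \<Rightarrow> quat \<Rightarrow> quat" where "divide_quat x y = x * inverse y"
instance by standard (auto intro!: quat_eqI simp: algebra_simps quat_eq_iff)
end

instantiation quat :: real_normed_vector
begin
definition "norm_quat z = sqrt ((qRe z)\<^sup>2 + (qIm1 z)\<^sup>2 + (qIm2 z)\<^sup>2 + (qIm3 z)\<^sup>2)"
definition "sgn_quat (x :: quat) = scaleR (inverse (norm x)) x"
definition "dist_quat (x :: quat) y = norm (x - y)"
definition [code del]: "(uniformity :: (quat \<times> quat) filter) = (INF e\<in>{0 <..}. principal {(x, y). dist x y < e})"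
definition [code del]: "open (U :: quat set) \<longleftrightarrow> (\<forall>x\<in>U. eventually (\<lambda>(x', y). x' = x \<longrightarrow> y \<in> U) uniformity)"
instance
proof
  fix r :: real and x y :: quat
  show "norm x = 0 \<longleftrightarrow> x = 0"
    by (auto simp: norm_quat_def quat_eq_iff add_nonneg_eq_0_iff)
  have e: "norm z = norm (qRe z, qIm1 z, qIm2 z, qIm3 z)" for z :: quat
    by (simp add: norm_quat_def norm_Pair add.assoc)
  have "(qRe (x+y), qIm1 (x+y), qIm2 (x+y), qIm3 (x+y)) = (qRe x, qIm1 x, qIm2 x, qIm3 x) + (qRe y, qIm1 y, qIm2 y, qIm3 y)"
    by simp
  then show "norm (x + y) \<le> norm x + norm y"
    unfolding e by (metis norm_triangle_ineq)
  show "norm (scaleR r x) = \<bar>r\<bar> * norm x"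
    by (simp add: norm_quat_def power_mult_distrib distrib_left[symmetric] real_sqrt_mult)
qed (rule sgn_quat_def dist_quat_def open_quat_def uniformity_quat_def)+
end


primcorec cnj_quat :: "quat \<Rightarrow> quat" where
  "qRe (cnj_quat a) = qRe a" | "qIm1 (cnj_quat a) = - qIm1 a"
| "qIm2 (cnj_quat a) = - qIm2 a" | "qIm3 (cnj_quat a) = - qIm3 a"

definition two_sided_qbanach :: "(quat \<Rightarrow> 'a \<Rightarrow> 'a) \<Rightarrow> ('a::banach \<Rightarrow> quat \<Rightarrow> 'a) \<Rightarrow> bool" where
  "two_sided_qbanach ql qr \<longleftrightarrow>
     (\<forall>s t v. ql (s + t) v = ql s v + ql t v) \<and>
     (\<forall>s v w. ql s (v + w) = ql s v + ql s w) \<and>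
     (\<forall>s t v. ql (s * t) v = ql s (ql t v)) \<and>
     (\<forall>v. ql 1 v = v) \<and>
     (\<forall>s t v. qr v (s + t) = qr v s + qr v t) \<and>
     (\<forall>s v w. qr (v + w) s = qr v s + qr w s) \<and>
     (\<forall>s t v. qr v (s * t) = qr (qr v s) t) \<and>
     (\<forall>v. qr v 1 = v) \<and>
     (\<forall>s t v. ql s (qr v t) = qr (ql s v) t) \<and>
     (\<forall>r v. ql (of_real r) v = r *\<^sub>R v \<and> qr v (of_real r) = r *\<^sub>R v) \<and>
     (\<forall>s v. norm (ql s v) = norm s * norm v \<and> norm (qr v s) = norm s * norm v)"

text \<open>Membership in B(X): bounded right H-linear operators.\<close>
definition right_linear :: "('a \<Rightarrow> quat \<Rightarrow> 'a) \<Rightarrow> ('a::real_normed_vector \<Rightarrow>\<^sub>L 'a) \<Rightarrow> bool" where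
  "right_linear qr T \<longleftrightarrow> (\<forall>v q. blinfun_apply T (qr v q) = qr (blinfun_apply T v) q)"

definition lmul :: "(quat \<Rightarrow> 'a \<Rightarrow> 'a) \<Rightarrow> quat \<Rightarrow> ('a::real_normed_vector \<Rightarrow>\<^sub>L 'a)" where
  "lmul ql s = Blinfun (ql s)"

definition bpow :: "('a::real_normed_vector \<Rightarrow>\<^sub>L 'a) \<Rightarrow> nat \<Rightarrow> ('a \<Rightarrow>\<^sub>L 'a)" where
  "bpow T m = ((\<lambda>S. T o\<^sub>L S) ^^ m) id_blinfun"

definition Qop :: "quat \<Rightarrow> ('a::real_normed_vector \<Rightarrow>\<^sub>L 'a) \<Rightarrow> ('a \<Rightarrow>\<^sub>L 'a)" where
  "Qop s T = bpow T 2 - (2 * qRe s) *\<^sub>R T + (norm s)\<^sup>2 *\<^sub>R id_blinfun"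

definition invertible_B :: "('a \<Rightarrow> quat \<Rightarrow> 'a) \<Rightarrow> ('a::real_normed_vector \<Rightarrow>\<^sub>L 'a) \<Rightarrow> bool" where
  "invertible_B qr A \<longleftrightarrow> (\<exists>S. right_linear qr S \<and> S o\<^sub>L A = id_blinfun \<and> A o\<^sub>L S = id_blinfun)"

definition binv :: "('a::real_normed_vector \<Rightarrow>\<^sub>L 'a) \<Rightarrow> ('a \<Rightarrow>\<^sub>L 'a)" where
  "binv A = (THE S. S o\<^sub>L A = id_blinfun \<and> A o\<^sub>L S = id_blinfun)"

definition S_resolvent :: "('a \<Rightarrow> quat \<Rightarrow> 'a) \<Rightarrow> ('a::real_normed_vector \<Rightarrow>\<^sub>L 'a) \<Rightarrow> quat set" where
  "S_resolvent qr T = {s. invertible_B qr (Qop s T)}"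

definition S_spectrum :: "('a \<Rightarrow> quat \<Rightarrow> 'a) \<Rightarrow> ('a::real_normed_vector \<Rightarrow>\<^sub>L 'a) \<Rightarrow> quat set" where
  "S_spectrum qr T = UNIV - S_resolvent qr T"

definition S_radius :: "('a \<Rightarrow> quat \<Rightarrow> 'a) \<Rightarrow> ('a::real_normed_vector \<Rightarrow>\<^sub>L 'a) \<Rightarrow> real" where
  "S_radius qr T = Sup (norm ` S_spectrum qr T)"

definition SL_neg :: "(quat \<Rightarrow> 'a \<Rightarrow> 'a) \<Rightarrow> nat \<Rightarrow> quat \<Rightarrow> ('a::real_normed_vector \<Rightarrow>\<^sub>L 'a) \<Rightarrow> ('a \<Rightarrow>\<^sub>L 'a)" where
  "SL_neg ql n s T = bpow (binv (Qop s T)) n o\<^sub>L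
     (\<Sum>m\<le>n. real (n choose m) *\<^sub>R (bpow (- T) m o\<^sub>L lmul ql (cnj_quat s ^ (n - m))))"

end

theory Submission imports Defs "HOL-Analysis.Generalised_Binomial_Theorem" begin

section \<open>Operator algebra basics\<close>

lemma cL_assoc: "(A o\<^sub>L B) o\<^sub>L C = A o\<^sub>L (B o\<^sub>L C)"
  by (rule blinfun_eqI) simp
lemma cL_id1[simp]: "id_blinfun o\<^sub>L A = A"
  by (rule blinfun_eqI) simp
lemma cL_id2[simp]: "A o\<^sub>L id_blinfun = A"
  by (rule blinfun_eqI) simp
lemma cL_add1: "(A + B) o\<^sub>L C = (A o\<^sub>L C) + (B o\<^sub>L C)"
  by (rule blinfun_eqI) (simp add: blinfun.add_left)
lemma cL_add2: "C o\<^sub>L (A + B) = (C o\<^sub>L A) + (C o\<^sub>L B)"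
  by (rule blinfun_eqI) (simp add: blinfun.add_left blinfun.add_right)
lemma cL_diff1: "(A - B) o\<^sub>L C = (A o\<^sub>L C) - (B o\<^sub>L C)"
  by (rule blinfun_eqI) (simp add: blinfun.diff_left)
lemma cL_diff2: "C o\<^sub>L (A - B) = (C o\<^sub>L A) - (C o\<^sub>L B)"
  by (rule blinfun_eqI) (simp add: blinfun.diff_left blinfun.diff_right)
lemma cL_minus1: "(- A) o\<^sub>L C = - (A o\<^sub>L C)"
  by (rule blinfun_eqI) (simp add: blinfun.minus_left)
lemma cL_minus2: "C o\<^sub>L (- A) = - (C o\<^sub>L A)"
  by (rule blinfun_eqI) (simp add: blinfun.minus_left blinfun.minus_right)
lemma cL_scale1: "(r *\<^sub>R A) o\<^sub>L C = r *\<^sub>R (A o\<^sub>L C)"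
  by (rule blinfun_eqI) (simp add: blinfun.scaleR_left)
lemma cL_scale2: "C o\<^sub>L (r *\<^sub>R A) = r *\<^sub>R (C o\<^sub>L A)"
  by (rule blinfun_eqI) (simp add: blinfun.scaleR_left blinfun.scaleR_right)
lemma cL_sum1: "(\<Sum>i\<in>I. f i) o\<^sub>L C = (\<Sum>i\<in>I. f i o\<^sub>L C)"
  by (induction I rule: infinite_finite_induct) (auto simp: cL_add1)
lemma cL_sum2: "C o\<^sub>L (\<Sum>i\<in>I. f i) = (\<Sum>i\<in>I. C o\<^sub>L f i)"
  by (induction I rule: infinite_finite_induct) (auto simp: cL_add2)

lemmas cL_simps = cL_add1 cL_add2 cL_diff1 cL_diff2 cL_minus1 cL_minus2 cL_scale1 cL_scale2

lemma bpow_0[simp]: "bpow T 0 = id_blinfun"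
  by (simp add: bpow_def)
lemma bpow_Suc: "bpow T (Suc m) = T o\<^sub>L bpow T m"
  by (simp add: bpow_def)
lemma bpow_add: "bpow T (m + k) = bpow T m o\<^sub>L bpow T k"
  by (induction m) (simp_all add: bpow_Suc cL_assoc)
lemma bpow_Suc': "bpow T (Suc m) = bpow T m o\<^sub>L T"
  using bpow_add[of T m 1] by (simp add: bpow_Suc)
lemma bpow_1[simp]: "bpow T 1 = T"
  by (simp add: bpow_Suc)
lemma bpow_2: "bpow T 2 = T o\<^sub>L T"
  by (simp add: bpow_Suc numeral_2_eq_2)
lemma bpow_comm: "A o\<^sub>L B = B o\<^sub>L A \<Longrightarrow> A o\<^sub>L bpow B m = bpow B m o\<^sub>L A"
proof (induction m)
  case (Suc m)
  then show ?case by (simp add: bpow_Suc flip: cL_assoc) (simp add: cL_assoc)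
qed simp
lemma bpow_mult: assumes c: "A o\<^sub>L B = B o\<^sub>L A" shows "bpow (A o\<^sub>L B) m = bpow A m o\<^sub>L bpow B m"
proof (induction m)
  case (Suc m)
  have "bpow (A o\<^sub>L B) (Suc m) = A o\<^sub>L (B o\<^sub>L bpow A m) o\<^sub>L bpow B m"
    using Suc by (simp add: bpow_Suc cL_assoc)
  also have "B o\<^sub>L bpow A m = bpow A m o\<^sub>L B"
    using bpow_comm[OF c[symmetric]] by simp
  finally show ?case by (simp add: bpow_Suc cL_assoc)
qed simp
lemma bpow_scale: "bpow (c *\<^sub>R A) m = c ^ m *\<^sub>R bpow A m"
  by (induction m) (simp_all add: bpow_Suc cL_simps)
lemma bpow_uminus: "bpow (- A) m = (-1) ^ m *\<^sub>R bpow A m"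
  using bpow_scale[of "-1" A m] by simp
lemma norm_bpow: "norm (bpow A m) \<le> norm A ^ m"
proof (induction m)
  case 0 show ?case by (simp add: norm_blinfun_id_le)
next
  case (Suc m)
  have "norm (bpow A (Suc m)) \<le> norm A * norm (bpow A m)"
    by (simp add: bpow_Suc norm_blinfun_compose)
  also have "\<dots> \<le> norm A * norm A ^ m" using Suc by (simp add: mult_left_mono)
  finally show ?case by simp
qed

definition inv2 :: "('a::real_normed_vector \<Rightarrow>\<^sub>L 'a) \<Rightarrow> ('a \<Rightarrow>\<^sub>L 'a) \<Rightarrow> bool" where
  "inv2 A B \<longleftrightarrow> B o\<^sub>L A = id_blinfun \<and> A o\<^sub>L B = id_blinfun"

lemma inv2_unique: "B o\<^sub>L A = id_blinfun \<Longrightarrow> A o\<^sub>L C = id_blinfun \<Longrightarrow> B = C"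
  by (metis cL_assoc cL_id1 cL_id2)
lemma inv2_lr: "B o\<^sub>L A = id_blinfun \<Longrightarrow> A o\<^sub>L C = id_blinfun \<Longrightarrow> inv2 A C"
  using inv2_unique unfolding inv2_def by metis
lemma inv2_mult: "inv2 A B \<Longrightarrow> inv2 C D \<Longrightarrow> inv2 (A o\<^sub>L C) (D o\<^sub>L B)"
  unfolding inv2_def by (metis cL_assoc cL_id1)
lemma inv2_uminus: "inv2 A B \<Longrightarrow> inv2 (- A) (- B)"
  unfolding inv2_def by (simp add: cL_simps)
lemma inv2_id: "inv2 id_blinfun id_blinfun"
  by (simp add: inv2_def)
lemma inv2_sym: "inv2 A B \<Longrightarrow> inv2 B A"
  by (simp add: inv2_def)
lemma inv2_comm: "inv2 A B \<Longrightarrow> A o\<^sub>L C = C o\<^sub>L A \<Longrightarrow> B o\<^sub>L C = C o\<^sub>L B"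
  unfolding inv2_def by (metis cL_assoc cL_id1 cL_id2)
lemma inv2_binv: "inv2 A B \<Longrightarrow> binv A = B"
  unfolding binv_def inv2_def
  by (rule the_equality) (auto intro: inv2_unique)
lemma inv2_bpow: "inv2 A B \<Longrightarrow> bpow B n o\<^sub>L bpow A n = id_blinfun"
proof (induction n)
  case (Suc n)
  have "bpow B (Suc n) o\<^sub>L bpow A (Suc n) = bpow B n o\<^sub>L (B o\<^sub>L A) o\<^sub>L bpow A n"
    unfolding bpow_Suc'[of B] bpow_Suc[of A] by (simp add: cL_assoc)
  then show ?case using Suc by (simp add: inv2_def)
qed simp


section \<open>Quaternion facts\<close>

lemma quat_of_real_simps[simp]:
  "qRe (of_real r) = r" "qIm1 (of_real r) = 0" "qIm2 (of_real r) = 0" "qIm3 (of_real r) = 0"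
  by (simp_all add: of_real_def)

lemma quat_norm_sq: "(norm q)\<^sup>2 = (qRe q)\<^sup>2 + (qIm1 q)\<^sup>2 + (qIm2 q)\<^sup>2 + (qIm3 q)\<^sup>2"
  by (simp add: norm_quat_def)

lemma quat_norm_mult: "norm (p * q) = norm p * norm (q::quat)"
proof -
  have "(norm (p * q))\<^sup>2 = (norm p * norm q)\<^sup>2"
    unfolding power_mult_distrib quat_norm_sq
    by (simp add: power2_eq_square algebra_simps)
  then show ?thesis by (simp add: power2_eq_iff_nonneg)
qed

lemma quat_norm_one[simp]: "norm (1::quat) = 1"
  by (simp add: norm_quat_def)

lemma quat_norm_power: "norm (p ^ k) = norm (p::quat) ^ k"
  by (induction k) (simp_all add: quat_norm_mult)

lemma quat_mult_cnj: "s * cnj_quat s = of_real ((norm s)\<^sup>2)"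
proof -
  have h: "norm s * norm s = qRe s * qRe s + qIm1 s * qIm1 s + qIm2 s * qIm2 s + qIm3 s * qIm3 s"
    using quat_norm_sq[of s] by (simp add: power2_eq_square)
  show ?thesis
    by (rule quat_eqI) (simp_all add: h power2_eq_square algebra_simps del: of_real_power)
qed

lemma quat_cnj_mult: "cnj_quat s * s = of_real ((norm s)\<^sup>2)"
proof -
  have h: "norm s * norm s = qRe s * qRe s + qIm1 s * qIm1 s + qIm2 s * qIm2 s + qIm3 s * qIm3 s"
    using quat_norm_sq[of s] by (simp add: power2_eq_square)
  show ?thesis
    by (rule quat_eqI) (simp_all add: h power2_eq_square algebra_simps del: of_real_power)
qed

lemma quat_add_cnj: "s + cnj_quat s = of_real (2 * qRe s)"
  by (rule quat_eqI) (simp_all del: of_real_mult)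

lemma quat_inverse_cnj: "inverse s = (1 / (norm s)\<^sup>2) *\<^sub>R cnj_quat s"
  by (rule quat_eqI) (simp_all add: quat_norm_sq)

lemma quat_inverse_mult: "s \<noteq> 0 \<Longrightarrow> inverse s * s = (1::quat)"
  unfolding quat_inverse_cnj by (simp add: quat_cnj_mult of_real_def del: of_real_power)

lemma quat_mult_inverse: "s \<noteq> 0 \<Longrightarrow> s * inverse s = (1::quat)"
  unfolding quat_inverse_cnj by (simp add: quat_mult_cnj of_real_def del: of_real_power)

lemma quat_norm_inverse: "s \<noteq> 0 \<Longrightarrow> norm (inverse s) = inverse (norm (s::quat))"
  using quat_norm_mult[of "inverse s" s] quat_inverse_mult[of s]
  by (simp add: field_simps)

lemma quat_real_comm: "of_real r * q = q * (of_real r :: quat)"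
  by (rule quat_eqI) (simp_all add: algebra_simps)


definition cq :: "complex \<Rightarrow> quat" where "cq z = Quat (Re z) (Im z) 0 0"

lemma cq_sel[simp]: "qRe (cq z) = Re z" "qIm1 (cq z) = Im z" "qIm2 (cq z) = 0" "qIm3 (cq z) = 0"
  by (simp_all add: cq_def)
lemma cq_mult: "cq (z * w) = cq z * cq w"
  by (rule quat_eqI) simp_all
lemma cq_add: "cq (z + w) = cq z + cq w"
  by (rule quat_eqI) simp_all
lemma cq_of_real: "cq (of_real r) = of_real r"
  by (rule quat_eqI) simp_all
lemma cq_one: "cq 1 = 1"
  by (rule quat_eqI) simp_all
lemma cq_zero: "cq 0 = 0"
  by (rule quat_eqI) simp_all
lemma norm_cq: "norm (cq z) = cmod z"
  by (simp add: norm_quat_def cmod_def)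

section \<open>Roots of unity\<close>

definition rou :: "nat \<Rightarrow> complex" where "rou k = exp (2 * of_real pi * \<i> / of_nat k)"

lemma rou_norm: "cmod (rou k) = 1"
  by (simp add: rou_def norm_exp_eq_Re)

lemma rou_pow_m: "rou k ^ m = exp (of_nat m * (2 * of_real pi * \<i> / of_nat k))"
  unfolding rou_def by (rule exp_of_nat_mult[symmetric])

lemma rou_pow: "k > 0 \<Longrightarrow> rou k ^ k = 1"
  unfolding rou_pow_m by simp

lemma rou_sum: assumes "0 < m" "m < k" shows "(\<Sum>j<k. (rou k ^ m) ^ j) = 0"
proof -
  have ne: "rou k ^ m \<noteq> 1"
  proof
    assume "rou k ^ m = 1"
    then obtain n :: int where n: "Im (of_nat m * (2 * of_real pi * \<i> / of_nat k)) = of_int (2 * n) * pi"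
      unfolding rou_pow_m exp_eq_1 by blast
    then have "real m * (2 * pi) / real k = 2 * of_int n * pi" by simp
    then have "real m * (2 * pi) = 2 * of_int n * pi * real k" using assms by (simp add: field_simps)
    then have "(real m - of_int n * real k) * (2 * pi) = 0" by (simp add: algebra_simps)
    then have "real m = of_int n * real k" using pi_gt_zero by simp
    then have mn: "int m = n * int k" by (metis of_int_eq_iff of_int_mult of_int_of_nat_eq)
    show False
    proof (cases "n \<le> 0")
      case True
      then have "n * int k \<le> 0" by (simp add: mult_nonpos_nonneg)
      then show False using mn assms by simp
    next
      case False
      then have h1: "int k \<le> n * int k" by (simp add: mult_le_cancel_right1)
      have h2: "int m < int k" using assms by simp
      show False using mn h1 h2 by linarith
    qed
  qed
  have "(rou k ^ m) ^ k = (rou k ^ k) ^ m" by (simp flip: power_mult add: mult.commute)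
  also have "\<dots> = 1" using assms by (simp add: rou_pow)
  finally have "(rou k ^ m) ^ k = 1" .
  then show ?thesis using ne by (simp add: sum_gp_strict)
qed

lemma inv_near_id:
  assumes "inv2 (id_blinfun - x) y" "norm x \<le> 1/2"
  shows "norm (y - id_blinfun) \<le> 2 * norm x"
proof -
  have "(id_blinfun - x) o\<^sub>L y = id_blinfun" using assms by (simp add: inv2_def)
  then have e: "y - id_blinfun = x o\<^sub>L y" by (simp add: cL_diff1 algebra_simps)
  have "norm y \<le> norm (id_blinfun :: 'a \<Rightarrow>\<^sub>L 'a) + norm (x o\<^sub>L y)"
    by (metis e add.commute diff_add_cancel norm_triangle_ineq)
  also have "\<dots> \<le> 1 + norm x * norm y"
    by (intro add_mono norm_blinfun_id_le norm_blinfun_compose)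
  also have "\<dots> \<le> 1 + norm y / 2"
  proof -
    have "norm x * norm y \<le> (1/2) * norm y" by (rule mult_right_mono) (use assms(2) in auto)
    then show ?thesis by simp
  qed
  finally have ny: "norm y \<le> 2" by simp
  have "norm (y - id_blinfun) \<le> norm x * norm y" unfolding e by (rule norm_blinfun_compose)
  also have "\<dots> \<le> norm x * 2" using ny by (simp add: mult_left_mono)
  finally show ?thesis by simp
qed

lemma near_id_inv:
  assumes "inv2 (id_blinfun - x) y" "norm (y - id_blinfun) \<le> 1/4"
  shows "norm x \<le> 1/3"
proof -
  define e where "e = y - id_blinfun"
  have "y o\<^sub>L (id_blinfun - x) = id_blinfun" using assms by (simp add: inv2_def)
  then have "(id_blinfun + e) o\<^sub>L (id_blinfun - x) = id_blinfun" by (simp add: e_def)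
  then have x: "x = e - (e o\<^sub>L x)" by (simp add: cL_simps algebra_simps)
  have "norm x \<le> norm e + norm (e o\<^sub>L x)"
    by (subst x) (rule norm_triangle_ineq4)
  also have "\<dots> \<le> norm e + norm e * norm x"
    by (intro add_left_mono norm_blinfun_compose)
  also have "\<dots> \<le> 1/4 + norm x / 4"
  proof -
    have "norm e * norm x \<le> (1/4) * norm x" by (rule mult_right_mono) (use assms(2) e_def in auto)
    then show ?thesis using assms(2) e_def by simp
  qed
  finally show ?thesis by simp
qed

lemma geo_sum1:
  "(\<Sum>m<k. bpow x m) o\<^sub>L (id_blinfun - x) = id_blinfun - bpow x k"
proof (induction k)
  case (Suc k)
  define S where "S = (\<Sum>m<k. bpow x m)"
  have IH: "S o\<^sub>L x = S - id_blinfun + bpow x k" using Suc by (simp add: S_def cL_simps algebra_simps)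
  show ?case unfolding sum.lessThan_Suc S_def[symmetric] cL_simps IH
    by (simp add: bpow_Suc' algebra_simps)
qed simp

lemma geo_sum2:
  "(id_blinfun - x) o\<^sub>L (\<Sum>m<k. bpow x m) = id_blinfun - bpow x k"
proof (induction k)
  case (Suc k)
  define S where "S = (\<Sum>m<k. bpow x m)"
  have IH: "x o\<^sub>L S = S - id_blinfun + bpow x k" using Suc by (simp add: S_def cL_simps algebra_simps)
  show ?case unfolding sum.lessThan_Suc S_def[symmetric] cL_simps IH
    by (simp add: bpow_Suc algebra_simps)
qed simp

lemma sums_cL_left: "f sums S \<Longrightarrow> (\<lambda>n. C o\<^sub>L f n) sums (C o\<^sub>L S)"
  by (rule bounded_linear.sums[OF bounded_bilinear.bounded_linear_right[OF bounded_bilinear_blinfun_compose]])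
lemma sums_cL_right: "f sums S \<Longrightarrow> (\<lambda>n. f n o\<^sub>L C) sums (S o\<^sub>L C)"
  by (rule bounded_linear.sums[OF bounded_bilinear.bounded_linear_left[OF bounded_bilinear_blinfun_compose]])

lemma neumann:
  fixes A :: "'a::banach \<Rightarrow>\<^sub>L 'a"
  assumes nA: "norm A < 1"
  shows "\<exists>B. inv2 (id_blinfun - A) B"
proof -
  have sn: "summable (\<lambda>k. norm A ^ k)" using nA by (intro summable_geometric) simp
  have sm: "summable (bpow A)" by (rule summable_comparison_test'[OF sn]) (rule norm_bpow)
  have z: "bpow A \<longlonglongrightarrow> 0"
  proof (rule Lim_null_comparison)
    show "\<forall>\<^sub>F k in sequentially. norm (bpow A k) \<le> norm A ^ k"
      by (intro always_eventually allI norm_bpow)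
    show "(\<lambda>k. norm A ^ k) \<longlonglongrightarrow> 0" using nA by (intro LIMSEQ_power_zero) simp
  qed
  define B where "B = suminf (bpow A)"
  have B: "bpow A sums B" using sm by (simp add: B_def summable_sums)
  have tel: "(\<lambda>k. bpow A k - bpow A (Suc k)) sums id_blinfun"
    using sums_minus[OF telescope_sums[OF z]] by simp
  have "(\<lambda>k. (id_blinfun - A) o\<^sub>L bpow A k) sums ((id_blinfun - A) o\<^sub>L B)"
    by (rule sums_cL_left[OF B])
  moreover have "(\<lambda>k. (id_blinfun - A) o\<^sub>L bpow A k) = (\<lambda>k. bpow A k - bpow A (Suc k))"
    by (simp add: cL_simps bpow_Suc)
  ultimately have 1: "(id_blinfun - A) o\<^sub>L B = id_blinfun" using tel sums_unique2 by metis
  have "(\<lambda>k. bpow A k o\<^sub>L (id_blinfun - A)) sums (B o\<^sub>L (id_blinfun - A))"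
    by (rule sums_cL_right[OF B])
  moreover have "(\<lambda>k. bpow A k o\<^sub>L (id_blinfun - A)) = (\<lambda>k. bpow A k - bpow A (Suc k))"
    by (simp add: cL_simps bpow_Suc')
  ultimately have 2: "B o\<^sub>L (id_blinfun - A) = id_blinfun" using tel sums_unique2 by metis
  show ?thesis using 1 2 by (auto simp: inv2_def)
qed

lemma summable_binom_geo:
  assumes n: "n > 0" and q: "0 \<le> q" "q < 1"
  shows "summable (\<lambda>m. real ((m + n - 1) choose (n - 1)) * q ^ m)"
proof -
  have "(\<lambda>m. ((- real n) gchoose m) * (- q) ^ m) sums (1 + - q) powr (- real n)"
    by (rule gen_binomial_real) (use q in simp)
  then have sm: "summable (\<lambda>m. ((- real n) gchoose m) * (- q) ^ m)" by (rule sums_summable)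
  have "((- real n) gchoose m) * (- q) ^ m = real ((m + n - 1) choose (n - 1)) * q ^ m" for m
  proof -
    have "((- real n) gchoose m) * (- q) ^ m = ((real n + real m - 1) gchoose m) * (((-1) ^ m) * (- q) ^ m)"
      by (simp add: gbinomial_minus mult_ac)
    also have "((-1::real) ^ m) * (- q) ^ m = q ^ m"
      by (simp flip: power_mult_distrib)
    also have "real n + real m - 1 = real (m + n - 1)" using n by simp
    also have "(real (m + n - 1) gchoose m) = real ((m + n - 1) choose m)"
      by (simp add: binomial_gbinomial)
    also have "(m + n - 1) choose m = (m + n - 1) choose (n - 1)"
      using n by (subst binomial_symmetric) auto
    finally show ?thesis .
  qed
  then show ?thesis using sm by simp
qed

lemma pascal_sum:
  fixes a :: "nat \<Rightarrow> 'v::real_vector"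
  shows "(\<Sum>m\<le>Suc n. real (Suc n choose m) *\<^sub>R a m) =
    (\<Sum>m\<le>n. real (n choose m) *\<^sub>R a m) + (\<Sum>m\<le>n. real (n choose m) *\<^sub>R a (Suc m))"
proof -
  have "(\<Sum>m\<le>Suc n. real (Suc n choose m) *\<^sub>R a m) = a 0 + (\<Sum>m\<le>n. real (Suc n choose Suc m) *\<^sub>R a (Suc m))"
    by (subst sum.atMost_Suc_shift) simp
  also have "\<dots> = a 0 + (\<Sum>m\<le>n. real (n choose Suc m) *\<^sub>R a (Suc m)) + (\<Sum>m\<le>n. real (n choose m) *\<^sub>R a (Suc m))"
    by (simp add: scaleR_add_left sum.distrib algebra_simps)
  also have "a 0 + (\<Sum>m\<le>n. real (n choose Suc m) *\<^sub>R a (Suc m)) = (\<Sum>m\<le>Suc n. real (n choose m) *\<^sub>R a m)"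
    by (subst sum.atMost_Suc_shift) simp
  also have "\<dots> = (\<Sum>m\<le>n. real (n choose m) *\<^sub>R a m)"
    by simp
  finally show ?thesis .
qed

locale qb =
  fixes ql :: "quat \<Rightarrow> 'a::banach \<Rightarrow> 'a" and qr :: "'a \<Rightarrow> quat \<Rightarrow> 'a"
  assumes tsq: "two_sided_qbanach ql qr"
begin

lemma ql_add2: "ql s (v + w) = ql s v + ql s w"
  using tsq by (simp add: two_sided_qbanach_def)
lemma ql_add1: "ql (s + t) v = ql s v + ql t v"
  using tsq by (simp add: two_sided_qbanach_def)
lemma ql_mult: "ql (s * t) v = ql s (ql t v)"
  using tsq by (simp add: two_sided_qbanach_def)
lemma ql_one: "ql 1 v = v"
  using tsq by (simp add: two_sided_qbanach_def)
lemma qr_add2: "qr v (s + t) = qr v s + qr v t"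
  using tsq by (simp add: two_sided_qbanach_def)
lemma qr_add1: "qr (v + w) s = qr v s + qr w s"
  using tsq by (simp add: two_sided_qbanach_def)
lemma qr_mult: "qr v (s * t) = qr (qr v s) t"
  using tsq by (simp add: two_sided_qbanach_def)
lemma qr_one: "qr v 1 = v"
  using tsq by (simp add: two_sided_qbanach_def)
lemma ql_qr: "ql s (qr v t) = qr (ql s v) t"
  using tsq by (simp add: two_sided_qbanach_def)
lemma ql_real: "ql (of_real r) v = r *\<^sub>R v"
  using tsq by (simp add: two_sided_qbanach_def)
lemma qr_real: "qr v (of_real r) = r *\<^sub>R v"
  using tsq by (simp add: two_sided_qbanach_def)
lemma norm_ql: "norm (ql s v) = norm s * norm v"
  using tsq by (simp add: two_sided_qbanach_def)
lemma norm_qr: "norm (qr v s) = norm s * norm v"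
  using tsq by (simp add: two_sided_qbanach_def)

lemma ql_scaleR: "ql s (r *\<^sub>R v) = r *\<^sub>R ql s v"
  by (metis ql_mult ql_real quat_real_comm)
lemma qr_scaleR: "qr (r *\<^sub>R v) s = r *\<^sub>R qr v s"
  by (metis ql_qr ql_real)

lemma bl_ql: "bounded_linear (ql s)"
  by (rule bounded_linear_intro[where K="norm s"]) (simp_all add: ql_add2 ql_scaleR norm_ql)
lemma bl_qr: "bounded_linear (\<lambda>v. qr v s)"
  by (rule bounded_linear_intro[where K="norm s"]) (simp_all add: qr_add1 qr_scaleR norm_qr)

lemma lmul_apply[simp]: "blinfun_apply (lmul ql s) = ql s"
  by (simp add: lmul_def bounded_linear_Blinfun_apply bl_ql)
lemma lmul_mult: "lmul ql (s * t) = lmul ql s o\<^sub>L lmul ql t"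
  by (rule blinfun_eqI) (simp add: ql_mult)
lemma lmul_one: "lmul ql 1 = id_blinfun"
  by (rule blinfun_eqI) (simp add: ql_one)
lemma lmul_add: "lmul ql (s + t) = lmul ql s + lmul ql t"
  by (rule blinfun_eqI) (simp add: ql_add1 blinfun.add_left)
lemma lmul_real: "lmul ql (of_real r) = r *\<^sub>R id_blinfun"
  by (rule blinfun_eqI) (simp add: ql_real blinfun.scaleR_left)
lemma norm_lmul: "norm (lmul ql s) \<le> norm s"
  by (rule norm_blinfun_bound) (simp_all add: norm_ql)

definition J :: "complex \<Rightarrow> ('a \<Rightarrow>\<^sub>L 'a)" where "J z = Blinfun (\<lambda>v. qr v (cq z))"

lemma J_apply[simp]: "blinfun_apply (J z) v = qr v (cq z)"
  by (simp add: J_def bounded_linear_Blinfun_apply bl_qr)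
lemma J_mult: "J (z * w) = J z o\<^sub>L J w"
  by (rule blinfun_eqI) (simp add: qr_mult mult.commute[of z w] cq_mult)
lemma J_add: "J (z + w) = J z + J w"
  by (rule blinfun_eqI) (simp add: cq_add qr_add2 blinfun.add_left)
lemma J_diff: "J (z - w) = J z - J w"
  using J_add[of "z - w" w] by simp
lemma J_real: "J (of_real r) = r *\<^sub>R id_blinfun"
  by (rule blinfun_eqI) (simp add: cq_of_real qr_real blinfun.scaleR_left)
lemma J_one: "J 1 = id_blinfun"
  using J_real[of 1] by simp
lemma J_zero: "J 0 = 0"
  using J_real[of 0] by simp
lemma J_sum: "J (\<Sum>i\<in>I. f i) = (\<Sum>i\<in>I. J (f i))"
  by (induction I rule: infinite_finite_induct) (simp_all add: J_zero J_add)
lemma J_of_nat: "J (of_nat k) = real k *\<^sub>R id_blinfun"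
  using J_real[of "real k"] by simp
lemma norm_J: "norm (J z) \<le> cmod z"
  by (rule norm_blinfun_bound) (simp_all add: norm_qr norm_cq)
lemma J_comm: "J z o\<^sub>L J w = J w o\<^sub>L J z"
  by (metis J_mult mult.commute)

lemma rl_J_comm: "right_linear qr A \<Longrightarrow> A o\<^sub>L J z = J z o\<^sub>L A"
  by (rule blinfun_eqI) (simp add: right_linear_def)

lemma bpow_J: assumes "\<And>z. A o\<^sub>L J z = J z o\<^sub>L A"
  shows "bpow (J c o\<^sub>L A) m = J (c ^ m) o\<^sub>L bpow A m"
proof (induction m)
  case 0 show ?case by (simp add: J_one)
next
  case (Suc m)
  have "bpow (J c o\<^sub>L A) (Suc m) = J c o\<^sub>L (A o\<^sub>L J (c ^ m)) o\<^sub>L bpow A m"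
    using Suc by (simp add: bpow_Suc cL_assoc)
  also have "\<dots> = J c o\<^sub>L J (c ^ m) o\<^sub>L A o\<^sub>L bpow A m"
    by (simp add: assms cL_assoc)
  finally show ?case by (simp add: bpow_Suc cL_assoc J_mult)
qed

lemma rickart:
  assumes comm: "\<And>z. A o\<^sub>L J z = J z o\<^sub>L A"
    and inv: "\<And>\<mu>. cmod \<mu> \<le> r0 \<Longrightarrow> \<exists>B. inv2 (id_blinfun - (J \<mu> o\<^sub>L A)) B"
    and r: "0 \<le> r" "r < r0"
  shows "(\<lambda>k. r ^ k * norm (bpow A k)) \<longlonglongrightarrow> 0"
proof -
  define f where "f \<mu> = (SOME B. inv2 (id_blinfun - (J \<mu> o\<^sub>L A)) B)" for \<mu>
  define D where "D = cball (0::complex) r0"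
  have f: "inv2 (id_blinfun - (J \<mu> o\<^sub>L A)) (f \<mu>)" if "\<mu> \<in> D" for \<mu>
    using inv[of \<mu>] that unfolding f_def D_def by (auto intro: someI_ex)
  have res: "f \<mu> - f \<nu> = f \<mu> o\<^sub>L (J (\<mu> - \<nu>) o\<^sub>L A) o\<^sub>L f \<nu>" if "\<mu> \<in> D" "\<nu> \<in> D" for \<mu> \<nu>
  proof -
    have e: "J (\<mu> - \<nu>) o\<^sub>L A = (id_blinfun - (J \<nu> o\<^sub>L A)) - (id_blinfun - (J \<mu> o\<^sub>L A))"
      by (simp add: J_diff cL_simps)
    have 1: "f \<mu> o\<^sub>L (id_blinfun - (J \<nu> o\<^sub>L A)) o\<^sub>L f \<nu> = f \<mu>"
      using f[OF that(2)] by (simp add: inv2_def cL_assoc)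
    have 2: "f \<mu> o\<^sub>L (id_blinfun - (J \<mu> o\<^sub>L A)) o\<^sub>L f \<nu> = f \<nu>"
      using f[OF that(1)] by (simp add: inv2_def cL_assoc)
    show ?thesis unfolding e cL_diff2[of "f \<mu>" "id_blinfun - (J \<nu> o\<^sub>L A)" "id_blinfun - (J \<mu> o\<^sub>L A)"]
        cL_diff1[of "f \<mu> o\<^sub>L (id_blinfun - (J \<nu> o\<^sub>L A))" "f \<mu> o\<^sub>L (id_blinfun - (J \<mu> o\<^sub>L A))" "f \<nu>"] 1 2
      by simp
  qed
  have resn: "norm (f \<mu> - f \<nu>) \<le> norm (f \<mu>) * (cmod (\<mu> - \<nu>) * norm A) * norm (f \<nu>)"
    if "\<mu> \<in> D" "\<nu> \<in> D" for \<mu> \<nu>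
  proof -
    have "norm (f \<mu> - f \<nu>) \<le> norm (f \<mu> o\<^sub>L (J (\<mu> - \<nu>) o\<^sub>L A)) * norm (f \<nu>)"
      unfolding res[OF that] by (rule norm_blinfun_compose)
    also have "\<dots> \<le> (norm (f \<mu>) * (cmod (\<mu> - \<nu>) * norm A)) * norm (f \<nu>)"
    proof (intro mult_right_mono norm_ge_zero)
      have "norm (J (\<mu> - \<nu>) o\<^sub>L A) \<le> cmod (\<mu> - \<nu>) * norm A"
        by (rule order_trans[OF norm_blinfun_compose]) (simp add: mult_right_mono norm_J)
      then show "norm (f \<mu> o\<^sub>L (J (\<mu> - \<nu>) o\<^sub>L A)) \<le> norm (f \<mu>) * (cmod (\<mu> - \<nu>) * norm A)"
        by (rule order_trans[OF norm_blinfun_compose mult_left_mono]) simp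
    qed
    finally show ?thesis .
  qed
  have loc: "norm (f \<mu>) \<le> 2 * norm (f \<nu>)"
    if "\<mu> \<in> D" "\<nu> \<in> D" "cmod (\<mu> - \<nu>) * norm A * norm (f \<nu>) \<le> 1/2" for \<mu> \<nu>
  proof -
    have "norm (f \<mu>) \<le> norm (f \<nu>) + norm (f \<mu> - f \<nu>)"
      by (metis add.commute diff_add_cancel norm_triangle_ineq)
    also have "norm (f \<mu> - f \<nu>) \<le> norm (f \<mu>) * (cmod (\<mu> - \<nu>) * norm A * norm (f \<nu>))"
      using resn[OF that(1,2)] by (simp add: mult.assoc)
    also have "\<dots> \<le> norm (f \<mu>) * (1/2)"
      by (rule mult_left_mono) (use that(3) in auto)
    finally show ?thesis by simp
  qed
  have cont: "continuous_on D f"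
    unfolding continuous_on_iff
  proof (intro ballI allI impI)
    fix \<nu> e assume \<nu>: "\<nu> \<in> D" and e: "(0::real) < e"
    define c where "c = norm (f \<nu>) + 1"
    define a where "a = norm A + 1"
    have c: "c > 0" "norm (f \<nu>) \<le> c" unfolding c_def using norm_ge_zero[of "f \<nu>"] by linarith+
    have a: "a > 0" "norm A \<le> a" unfolding a_def using norm_ge_zero[of A] by linarith+
    define d where "d = min (1 / (2 * a * c)) (e / (2 * c * c * a))"
    have d: "d > 0" using a c e by (simp add: d_def)
    show "\<exists>d>0. \<forall>\<mu>\<in>D. dist \<mu> \<nu> < d \<longrightarrow> dist (f \<mu>) (f \<nu>) < e"
    proof (intro exI[of _ d] conjI ballI impI d)
      fix \<mu> assume \<mu>: "\<mu> \<in> D" and dd: "dist \<mu> \<nu> < d"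
      have cm: "cmod (\<mu> - \<nu>) < d" using dd by (simp add: dist_norm)
      have "cmod (\<mu> - \<nu>) * norm A * norm (f \<nu>) \<le> d * a * c"
        using cm a c d by (intro mult_mono) auto
      also have "\<dots> \<le> 1 / (2 * a * c) * a * c"
        using a c by (intro mult_right_mono) (auto simp: d_def)
      also have "\<dots> = 1/2" using a c by simp
      finally have "norm (f \<mu>) \<le> 2 * norm (f \<nu>)" by (rule loc[OF \<mu> \<nu>])
      then have fm: "norm (f \<mu>) \<le> 2 * c" using c by simp
      have "dist (f \<mu>) (f \<nu>) \<le> norm (f \<mu>) * (cmod (\<mu> - \<nu>) * norm A) * norm (f \<nu>)"
        using resn[OF \<mu> \<nu>] by (simp add: dist_norm)
      also have "\<dots> \<le> (2 * c) * (cmod (\<mu> - \<nu>) * a) * c"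
        using fm a c by (intro mult_mono) auto
      also have "\<dots> < (2 * c) * (d * a) * c"
        using cm a c by (intro mult_strict_right_mono mult_strict_left_mono) auto
      also have "\<dots> \<le> (2 * c) * ((e / (2 * c * c * a)) * a) * c"
        using a c by (intro mult_right_mono mult_left_mono) (auto simp: d_def)
      also have "\<dots> = e" using a c by (simp add: field_simps)
      finally show "dist (f \<mu>) (f \<nu>) < e" .
    qed
  qed
  have "compact (f ` D)" unfolding D_def by (intro compact_continuous_image cont[unfolded D_def] compact_cball)
  then obtain K where K: "K > 0" "\<And>\<mu>. \<mu> \<in> D \<Longrightarrow> norm (f \<mu>) \<le> K"
    using compact_imp_bounded bounded_pos by (metis imageI)
  define L where "L = K * K * norm A"
  have L: "L \<ge> 0" using K by (simp add: L_def)
  have lip: "norm (f \<mu> - f \<nu>) \<le> L * cmod (\<mu> - \<nu>)" if "\<mu> \<in> D" "\<nu> \<in> D" for \<mu> \<nu>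
  proof -
    have "norm (f \<mu> - f \<nu>) \<le> norm (f \<mu>) * (cmod (\<mu> - \<nu>) * norm A) * norm (f \<nu>)"
      by (rule resn[OF that])
    also have "\<dots> \<le> K * (cmod (\<mu> - \<nu>) * norm A) * K"
      using K that by (intro mult_mono) auto
    finally show ?thesis by (simp add: L_def mult_ac)
  qed
  define g where "g k \<mu> = (1 / real k) *\<^sub>R (\<Sum>j<k. f (rou k ^ j * \<mu>))" for k \<mu>
  have rD: "rou k ^ j * \<mu> \<in> D" if "\<mu> \<in> D" for k j \<mu>
    using that by (simp add: D_def norm_mult norm_power rou_norm)
  have ginv: "inv2 (id_blinfun - (J (\<mu> ^ k) o\<^sub>L bpow A k)) (g k \<mu>)" if "\<mu> \<in> D" "k > 0" for \<mu> k
  proof -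
    define X where "X = id_blinfun - (J (\<mu> ^ k) o\<^sub>L bpow A k)"
    define G where "G j = (\<Sum>m<k. bpow (J (rou k ^ j * \<mu>) o\<^sub>L A) m)" for j
    have pk: "bpow (J (rou k ^ j * \<mu>) o\<^sub>L A) k = J (\<mu> ^ k) o\<^sub>L bpow A k" for j
    proof -
      have "(rou k ^ j * \<mu>) ^ k = (rou k ^ k) ^ j * \<mu> ^ k"
        by (simp add: power_mult_distrib flip: power_mult) (simp add: mult.commute)
      then show ?thesis using that by (simp add: bpow_J[OF comm] rou_pow)
    qed
    have XG: "X o\<^sub>L f (rou k ^ j * \<mu>) = G j" "f (rou k ^ j * \<mu>) o\<^sub>L X = G j" for j
    proof -
      have i: "inv2 (id_blinfun - (J (rou k ^ j * \<mu>) o\<^sub>L A)) (f (rou k ^ j * \<mu>))"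
        by (rule f[OF rD[OF that(1)]])
      have "X = G j o\<^sub>L (id_blinfun - (J (rou k ^ j * \<mu>) o\<^sub>L A))"
        unfolding X_def G_def geo_sum1 pk ..
      then show "X o\<^sub>L f (rou k ^ j * \<mu>) = G j"
        using i by (simp add: cL_assoc inv2_def)
      have "X = (id_blinfun - (J (rou k ^ j * \<mu>) o\<^sub>L A)) o\<^sub>L G j"
        unfolding X_def G_def geo_sum2 pk ..
      then show "f (rou k ^ j * \<mu>) o\<^sub>L X = G j"
        using i by (simp flip: cL_assoc add: inv2_def)
    qed
    have sumG: "(\<Sum>j<k. G j) = real k *\<^sub>R id_blinfun"
    proof -
      have "(\<Sum>j<k. G j) = (\<Sum>j<k. \<Sum>m<k. J ((rou k ^ j * \<mu>) ^ m) o\<^sub>L bpow A m)"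
        unfolding G_def by (simp add: bpow_J[OF comm])
      also have "\<dots> = (\<Sum>m<k. \<Sum>j<k. J ((rou k ^ j * \<mu>) ^ m) o\<^sub>L bpow A m)"
        by (rule sum.swap)
      also have "\<dots> = (\<Sum>m<k. J (\<mu> ^ m * (\<Sum>j<k. (rou k ^ m) ^ j)) o\<^sub>L bpow A m)"
        by (simp add: cL_sum1 J_sum sum_distrib_left power_mult_distrib mult.commute
            flip: power_mult)
      also have "\<dots> = (\<Sum>m<k. if m = 0 then real k *\<^sub>R id_blinfun else 0)"
      proof (rule sum.cong[OF refl])
        fix m assume "m \<in> {..<k}"
        then show "J (\<mu> ^ m * (\<Sum>j<k. (rou k ^ m) ^ j)) o\<^sub>L bpow A m =
            (if m = 0 then real k *\<^sub>R id_blinfun else 0)"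
          by (cases "m = 0") (simp_all add: rou_sum J_zero J_of_nat)
      qed
      also have "\<dots> = real k *\<^sub>R id_blinfun" using that(2) by simp
      finally show ?thesis .
    qed
    have "X o\<^sub>L g k \<mu> = id_blinfun"
      unfolding g_def cL_scale2 cL_sum2 XG sumG using that(2) by simp
    moreover have "g k \<mu> o\<^sub>L X = id_blinfun"
      unfolding g_def cL_scale1 cL_sum1 XG sumG using that(2) by simp
    ultimately show ?thesis by (simp add: inv2_def X_def)
  qed
  have gdiff: "norm (g k \<mu> - g k \<nu>) \<le> L * cmod (\<mu> - \<nu>)" if "\<mu> \<in> D" "\<nu> \<in> D" "k > 0" for k \<mu> \<nu>
  proof -
    have "g k \<mu> - g k \<nu> = (1 / real k) *\<^sub>R (\<Sum>j<k. f (rou k ^ j * \<mu>) - f (rou k ^ j * \<nu>))"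
      by (simp add: g_def sum_subtractf scaleR_diff_right)
    then have "norm (g k \<mu> - g k \<nu>) = (1 / real k) * norm (\<Sum>j<k. f (rou k ^ j * \<mu>) - f (rou k ^ j * \<nu>))"
      by simp
    also have "\<dots> \<le> (1 / real k) * (\<Sum>j<k. norm (f (rou k ^ j * \<mu>) - f (rou k ^ j * \<nu>)))"
      by (intro mult_left_mono norm_sum) simp
    also have "\<dots> \<le> (1 / real k) * (real k * (L * cmod (\<mu> - \<nu>)))"
    proof (intro mult_left_mono)
      have "(\<Sum>j<k. norm (f (rou k ^ j * \<mu>) - f (rou k ^ j * \<nu>))) \<le> of_nat (card {..<k}) * (L * cmod (\<mu> - \<nu>))"
      proof (rule sum_bounded_above)
        fix j assume "j \<in> {..<k}"
        have "norm (f (rou k ^ j * \<mu>) - f (rou k ^ j * \<nu>)) \<le> L * cmod (rou k ^ j * \<mu> - rou k ^ j * \<nu>)"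
          by (rule lip[OF rD[OF that(1)] rD[OF that(2)]])
        also have "cmod (rou k ^ j * \<mu> - rou k ^ j * \<nu>) = cmod (\<mu> - \<nu>)"
          by (simp add: norm_mult norm_power rou_norm flip: right_diff_distrib)
        finally show "norm (f (rou k ^ j * \<mu>) - f (rou k ^ j * \<nu>)) \<le> L * cmod (\<mu> - \<nu>)" .
      qed
      then show "(\<Sum>j<k. norm (f (rou k ^ j * \<mu>) - f (rou k ^ j * \<nu>))) \<le> real k * (L * cmod (\<mu> - \<nu>))"
        by simp
    qed simp
    also have "\<dots> = L * cmod (\<mu> - \<nu>)" using that(3) by simp
    finally show ?thesis .
  qed
  define \<delta> where "\<delta> = 1 / (8 * (L + 1))"
  have \<delta>: "\<delta> > 0" "L * \<delta> \<le> 1/8" using L by (simp_all add: \<delta>_def field_simps)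
  have Jr: "J (complex_of_real t ^ k) o\<^sub>L B = (t ^ k) *\<^sub>R B" for t k B
    by (simp add: J_real cL_scale1 flip: of_real_power)
  have step: "eventually (\<lambda>k. \<rho>2 ^ k * norm (bpow A k) \<le> 1/3) sequentially"
    if "0 \<le> \<rho>" "\<rho> \<le> \<rho>2" "\<rho>2 \<le> r0" "\<rho>2 - \<rho> \<le> \<delta>" "(\<lambda>k. \<rho> ^ k * norm (bpow A k)) \<longlonglongrightarrow> 0"
    for \<rho> \<rho>2
  proof -
    have "eventually (\<lambda>k. \<rho> ^ k * norm (bpow A k) < 1/32) sequentially"
      using order_tendstoD(2)[OF that(5), of "1/32"] by simp
    moreover have "eventually (\<lambda>k. k > 0) sequentially" by (rule eventually_gt_at_top)
    ultimately show ?thesis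
    proof eventually_elim
      case (elim k)
      have D1: "complex_of_real \<rho> \<in> D" and D2: "complex_of_real \<rho>2 \<in> D"
        using that by (auto simp: D_def)
      have i1: "inv2 (id_blinfun - (\<rho> ^ k) *\<^sub>R bpow A k) (g k \<rho>)"
        using ginv[OF D1 elim(2)] by (simp add: Jr)
      have i2: "inv2 (id_blinfun - (\<rho>2 ^ k) *\<^sub>R bpow A k) (g k \<rho>2)"
        using ginv[OF D2 elim(2)] by (simp add: Jr)
      have n1: "norm ((\<rho> ^ k) *\<^sub>R bpow A k) \<le> 1/32"
        using elim(1) that(1) by simp
      have "norm (g k \<rho> - id_blinfun) \<le> 2 * norm ((\<rho> ^ k) *\<^sub>R bpow A k)"
        by (rule inv_near_id[OF i1]) (use n1 in simp)
      also have "\<dots> \<le> 1/16" using n1 by simp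
      finally have a1: "norm (g k \<rho> - id_blinfun) \<le> 1/16" .
      have "norm (g k \<rho>2 - g k \<rho>) \<le> L * cmod (complex_of_real \<rho>2 - complex_of_real \<rho>)"
        by (rule gdiff[OF D2 D1 elim(2)])
      also have "\<dots> = L * (\<rho>2 - \<rho>)"
        using that by (simp flip: of_real_diff)
      also have "\<dots> \<le> L * \<delta>" using that L by (intro mult_left_mono) auto
      also have "\<dots> \<le> 1/8" by (rule \<delta>(2))
      finally have a2: "norm (g k \<rho>2 - g k \<rho>) \<le> 1/8" .
      have "norm (g k \<rho>2 - id_blinfun) \<le> norm (g k \<rho>2 - g k \<rho>) + norm (g k \<rho> - id_blinfun)"
        by (metis diff_add_cancel add_diff_eq norm_triangle_ineq)
      also have "\<dots> \<le> 1/4" using a1 a2 by simp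
      finally have "norm ((\<rho>2 ^ k) *\<^sub>R bpow A k) \<le> 1/3"
        by (rule near_id_inv[OF i2])
      then show ?case using that by simp
    qed
  qed
  define Sset where "Sset = {t. 0 \<le> t \<and> t \<le> r0 \<and> (\<lambda>k. t ^ k * norm (bpow A k)) \<longlonglongrightarrow> 0}"
  have r0: "r0 > 0" using r by simp
  have zero: "0 \<in> Sset"
  proof -
    have "(\<lambda>k. (0::real) ^ Suc k * norm (bpow A (Suc k))) \<longlonglongrightarrow> 0" by simp
    then have "(\<lambda>k. (0::real) ^ k * norm (bpow A k)) \<longlonglongrightarrow> 0" by (rule LIMSEQ_imp_Suc)
    then show ?thesis unfolding Sset_def using r0 by simp
  qed
  have bdd: "bdd_above Sset" unfolding Sset_def by (rule bdd_aboveI[of _ r0]) auto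
  have ne: "Sset \<noteq> {}" using zero by auto
  define \<sigma> where "\<sigma> = Sup Sset"
  have \<sigma>0: "0 \<le> \<sigma>" unfolding \<sigma>_def by (rule cSup_upper[OF zero bdd])
  have \<sigma>r0: "\<sigma> \<le> r0" unfolding \<sigma>_def by (rule cSup_least[OF ne]) (auto simp: Sset_def)
  have mono: "(\<lambda>k. t ^ k * norm (bpow A k)) \<longlonglongrightarrow> 0" if tt: "0 \<le> t" "t < \<sigma>" for t
  proof -
    obtain t' where t': "t' \<in> Sset" "t < t'"
      using tt(2) less_cSup_iff[OF ne bdd] unfolding \<sigma>_def by blast
    have lim: "(\<lambda>k. t' ^ k * norm (bpow A k)) \<longlonglongrightarrow> 0" using t' by (simp add: Sset_def)
    show ?thesis
    proof (rule Lim_null_comparison[OF _ lim])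
      show "\<forall>\<^sub>F k in sequentially. norm (t ^ k * norm (bpow A k)) \<le> t' ^ k * norm (bpow A k)"
        using tt t' by (intro always_eventually allI) (simp add: mult_right_mono power_mono)
    qed
  qed
  have "\<sigma> = r0"
  proof (rule ccontr)
    assume "\<sigma> \<noteq> r0"
    then have lt: "\<sigma> < r0" using \<sigma>r0 by simp
    obtain t where t: "t \<in> Sset" "\<sigma> - \<delta>/2 < t"
      using less_cSup_iff[OF ne bdd, of "\<sigma> - \<delta>/2"] \<delta> unfolding \<sigma>_def by auto
    have tle: "t \<le> \<sigma>" unfolding \<sigma>_def by (rule cSup_upper[OF t(1) bdd])
    define \<rho>2 where "\<rho>2 = min r0 (\<sigma> + \<delta>/2)"
    have \<rho>2: "\<sigma> < \<rho>2" "\<rho>2 \<le> r0" "\<rho>2 - t \<le> \<delta>" using lt \<delta> t by (auto simp: \<rho>2_def)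
    have ev: "eventually (\<lambda>k. \<rho>2 ^ k * norm (bpow A k) \<le> 1/3) sequentially"
      by (rule step) (use t tle \<rho>2 in \<open>auto simp: Sset_def\<close>)
    define t2 where "t2 = (\<sigma> + \<rho>2) / 2"
    have t2: "\<sigma> < t2" "t2 < \<rho>2" "0 \<le> t2" using \<rho>2 \<sigma>0 by (auto simp: t2_def)
    have pos: "\<rho>2 > 0" using \<rho>2 \<sigma>0 by simp
    have "(\<lambda>k. t2 ^ k * norm (bpow A k)) \<longlonglongrightarrow> 0"
    proof (rule Lim_null_comparison)
      show "\<forall>\<^sub>F k in sequentially. norm (t2 ^ k * norm (bpow A k)) \<le> (t2 / \<rho>2) ^ k * (1/3)"
        using ev
      proof eventually_elim
        case (elim k)
        have "t2 ^ k * norm (bpow A k) = (t2 / \<rho>2) ^ k * (\<rho>2 ^ k * norm (bpow A k))"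
          using pos by (simp add: power_divide)
        also have "\<dots> \<le> (t2 / \<rho>2) ^ k * (1/3)"
          using elim t2 pos by (intro mult_left_mono) auto
        finally show ?case using t2 by simp
      qed
      show "(\<lambda>k. (t2 / \<rho>2) ^ k * (1/3)) \<longlonglongrightarrow> 0"
        by (intro tendsto_mult_left_zero LIMSEQ_power_zero) (use t2 pos in simp)
    qed
    then have "t2 \<in> Sset" using t2 \<rho>2 by (simp add: Sset_def)
    then have "t2 \<le> \<sigma>" unfolding \<sigma>_def by (rule cSup_upper[OF _ bdd])
    then show False using t2 by simp
  qed
  then show ?thesis using mono r by simp
qed

lemma inv2_scale: "inv2 A B \<Longrightarrow> c \<noteq> 0 \<Longrightarrow> inv2 (c *\<^sub>R A) ((1/c) *\<^sub>R B)"
  by (simp add: inv2_def cL_simps)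

lemma factor_inv: "Q = X o\<^sub>L Y \<Longrightarrow> Q = Y o\<^sub>L X \<Longrightarrow> inv2 Q W \<Longrightarrow> inv2 X (Y o\<^sub>L W)"
  by (rule inv2_lr[of "W o\<^sub>L Y"]) (auto simp: inv2_def cL_assoc)

lemma qr_diff: "qr (v - w) s = qr v s - qr w s"
  by (metis add_diff_cancel qr_add1 diff_add_cancel)

lemma rl_inv: "right_linear qr A \<Longrightarrow> inv2 A B \<Longrightarrow> right_linear qr B"
  unfolding right_linear_def inv2_def
  by (metis blinfun_apply_blinfun_compose blinfun_apply_id_blinfun)

lemma Qop_eq: "Qop s T = (T o\<^sub>L T) - (2 * qRe s) *\<^sub>R T + (norm s)\<^sup>2 *\<^sub>R id_blinfun"
  by (simp add: Qop_def bpow_2)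

lemma rl_Qop: "right_linear qr T \<Longrightarrow> right_linear qr (Qop s T)"
  unfolding right_linear_def Qop_eq
  by (simp add: blinfun.diff_left blinfun.add_left blinfun.scaleR_left qr_diff qr_add1 qr_scaleR)

lemma res_inv: "s \<in> S_resolvent qr T \<Longrightarrow> \<exists>W. inv2 (Qop s T) W"
  unfolding S_resolvent_def invertible_B_def inv2_def by auto

lemma inv_res: "right_linear qr T \<Longrightarrow> inv2 (Qop s T) W \<Longrightarrow> s \<in> S_resolvent qr T"
  unfolding S_resolvent_def invertible_B_def
  using rl_inv[OF rl_Qop] by (auto simp: inv2_def)

lemma Qfact:
  assumes c: "\<And>z. T o\<^sub>L J z = J z o\<^sub>L T"
  shows "Qop (cq w) T = (T - J w) o\<^sub>L (T - J (cnj w))"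
    "Qop (cq w) T = (T - J (cnj w)) o\<^sub>L (T - J w)"
proof -
  have a: "J w + J (cnj w) = (2 * Re w) *\<^sub>R id_blinfun"
    by (simp flip: J_add J_real add: complex_add_cnj)
  have m: "J w o\<^sub>L J (cnj w) = (cmod w)\<^sup>2 *\<^sub>R id_blinfun"
    unfolding J_mult[symmetric] complex_norm_square[symmetric] J_real ..
  have m': "J (cnj w) o\<^sub>L J w = (cmod w)\<^sup>2 *\<^sub>R id_blinfun"
    using m J_comm by metis
  have "(T - J w) o\<^sub>L (T - J (cnj w)) = (T o\<^sub>L T) - ((J w + J (cnj w)) o\<^sub>L T) + (J w o\<^sub>L J (cnj w))"
    by (simp add: cL_simps c algebra_simps)
  then show "Qop (cq w) T = (T - J w) o\<^sub>L (T - J (cnj w))"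
    unfolding a m Qop_eq by (simp add: norm_cq cL_simps)
  have "(T - J (cnj w)) o\<^sub>L (T - J w) = (T o\<^sub>L T) - ((J w + J (cnj w)) o\<^sub>L T) + (J (cnj w) o\<^sub>L J w)"
    by (simp add: cL_simps c algebra_simps)
  then show "Qop (cq w) T = (T - J (cnj w)) o\<^sub>L (T - J w)"
    unfolding a m' Qop_eq by (simp add: norm_cq cL_simps)
qed

lemma lam_inv:
  assumes "right_linear qr T" "cq w \<in> S_resolvent qr T"
  shows "\<exists>B. inv2 (T - J w) B"
proof -
  have c: "\<And>z. T o\<^sub>L J z = J z o\<^sub>L T" using rl_J_comm[OF assms(1)] by blast
  obtain W where "inv2 (Qop (cq w) T) W" using res_inv[OF assms(2)] by blast
  then show ?thesis using factor_inv[OF Qfact[OF c]] by blast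
qed

lemma mu_inv:
  assumes "\<mu> \<noteq> 0" "inv2 (A - J (inverse \<mu>)) B"
  shows "inv2 (id_blinfun - (J \<mu> o\<^sub>L A)) ((- B) o\<^sub>L J (inverse \<mu>))"
proof -
  have jj: "J \<mu> o\<^sub>L J (inverse \<mu>) = id_blinfun" "J (inverse \<mu>) o\<^sub>L J \<mu> = id_blinfun"
    using assms(1) by (simp_all flip: J_mult add: J_one)
  have e: "id_blinfun - (J \<mu> o\<^sub>L A) = J \<mu> o\<^sub>L (J (inverse \<mu>) - A)"
    by (simp add: cL_simps jj)
  have "inv2 (J (inverse \<mu>) - A) (- B)" using inv2_uminus[OF assms(2)] by simp
  then show ?thesis unfolding e by (rule inv2_mult[of "J \<mu>" "J (inverse \<mu>)", rotated]) (simp add: inv2_def jj)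
qed

lemma abs_qRe_le: "\<bar>qRe s\<bar> \<le> norm s"
proof -
  have "(qRe s)\<^sup>2 \<le> (norm s)\<^sup>2" unfolding quat_norm_sq by simp
  then show ?thesis using real_sqrt_le_mono by (metis real_sqrt_abs norm_ge_zero real_sqrt_unique)
qed

lemma bdd_res:
  assumes rl: "right_linear qr T" and ns: "norm s > 3 * norm T + 1"
  shows "s \<in> S_resolvent qr T"
proof -
  define c where "c = (norm s)\<^sup>2"
  have ns0: "norm s > 0" using ns norm_ge_zero[of T] by linarith
  then have c: "c > 0" unfolding c_def by simp
  define A where "A = (1/c) *\<^sub>R ((2 * qRe s) *\<^sub>R T - (T o\<^sub>L T))"
  have eq: "Qop s T = c *\<^sub>R (id_blinfun - A)"
    using c by (simp add: A_def Qop_eq c_def algebra_simps)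
  have "norm ((2 * qRe s) *\<^sub>R T - (T o\<^sub>L T)) \<le> 2 * \<bar>qRe s\<bar> * norm T + norm T * norm T"
    by (rule order_trans[OF norm_triangle_ineq4], intro add_mono) (simp_all add: abs_mult norm_blinfun_compose)
  also have "\<dots> \<le> 2 * norm s * norm T + norm T * norm s"
    using ns abs_qRe_le[of s] by (intro add_mono mult_right_mono mult_left_mono) auto
  also have "\<dots> < c"
  proof -
    have "3 * norm T * norm s < norm s * norm s"
      using ns ns0 by (intro mult_strict_right_mono) auto
    then show ?thesis by (simp add: c_def power2_eq_square algebra_simps)
  qed
  finally have lt: "norm ((2 * qRe s) *\<^sub>R T - (T o\<^sub>L T)) < c" .
  have "norm A = norm ((2 * qRe s) *\<^sub>R T - (T o\<^sub>L T)) / c"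
    unfolding A_def using c by simp
  then have "norm A < 1" using lt c by simp
  then obtain B where "inv2 (id_blinfun - A) B" using neumann by blast
  then have "inv2 (Qop s T) ((1/c) *\<^sub>R B)" unfolding eq using c by (intro inv2_scale) auto
  then show ?thesis by (rule inv_res[OF rl])
qed

lemma spec_nonempty:
  assumes rl: "right_linear qr T" and nt: "\<exists>v::'a. v \<noteq> 0"
  shows "S_spectrum qr T \<noteq> {}"
proof
  assume "S_spectrum qr T = {}"
  then have allres: "s \<in> S_resolvent qr T" for s by (auto simp: S_spectrum_def)
  have c: "\<And>z. T o\<^sub>L J z = J z o\<^sub>L T" using rl_J_comm[OF rl] by blast
  have li: "\<exists>B. inv2 (T - J w) B" for w using lam_inv[OF rl allres] .
  obtain V where V: "inv2 T V" using li[of 0] by (auto simp: J_zero)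
  have cV: "\<And>z. V o\<^sub>L J z = J z o\<^sub>L V" using inv2_comm[OF V c] by blast
  have invT: "\<exists>B. inv2 (id_blinfun - (J \<mu> o\<^sub>L T)) B" for \<mu>
  proof (cases "\<mu> = 0")
    case True then show ?thesis using inv2_id by (auto simp: J_zero)
  next
    case False
    obtain B where "inv2 (T - J (inverse \<mu>)) B" using li by blast
    then show ?thesis using mu_inv[OF False] by blast
  qed
  have invV: "\<exists>B. inv2 (id_blinfun - (J \<mu> o\<^sub>L V)) B" for \<mu>
  proof -
    obtain B where B: "inv2 (T - J \<mu>) B" using li by blast
    have "id_blinfun - (J \<mu> o\<^sub>L V) = V o\<^sub>L (T - J \<mu>)"
      using V cV by (simp add: cL_simps inv2_def)
    moreover have "inv2 (V o\<^sub>L (T - J \<mu>)) (B o\<^sub>L T)"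
      by (rule inv2_mult[OF inv2_sym[OF V] B])
    ultimately show ?thesis by auto
  qed
  have tT: "(\<lambda>k. 1 ^ k * norm (bpow T k)) \<longlonglongrightarrow> 0"
  proof -
    have i: "\<exists>B. inv2 (id_blinfun - (J \<mu> o\<^sub>L T)) B" if "cmod \<mu> \<le> 2" for \<mu> using invT .
    have h12: "(1::real) < 2" by simp
    show ?thesis by (rule rickart[OF c i zero_le_one h12])
  qed
  have tV: "(\<lambda>k. 1 ^ k * norm (bpow V k)) \<longlonglongrightarrow> 0"
  proof -
    have i: "\<exists>B. inv2 (id_blinfun - (J \<mu> o\<^sub>L V)) B" if "cmod \<mu> \<le> 2" for \<mu> using invV .
    have h12: "(1::real) < 2" by simp
    show ?thesis by (rule rickart[OF cV i zero_le_one h12])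
  qed
  have lim: "(\<lambda>k. norm (bpow V k) * norm (bpow T k)) \<longlonglongrightarrow> 0 * 0"
    using tendsto_mult[OF tV tT] by simp
  have "norm (id_blinfun :: 'a \<Rightarrow>\<^sub>L 'a) \<le> 0 * 0"
  proof (rule LIMSEQ_le_const[OF lim], intro exI allI impI)
    fix k :: nat
    have "norm (id_blinfun :: 'a \<Rightarrow>\<^sub>L 'a) = norm (bpow V k o\<^sub>L bpow T k)"
      using inv2_bpow[OF V] by simp
    also have "\<dots> \<le> norm (bpow V k) * norm (bpow T k)" by (rule norm_blinfun_compose)
    finally show "norm (id_blinfun :: 'a \<Rightarrow>\<^sub>L 'a) \<le> norm (bpow V k) * norm (bpow T k)" .
  qed
  then have "(id_blinfun :: 'a \<Rightarrow>\<^sub>L 'a) = 0" by simp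
  then have "v = 0" for v :: 'a by (metis blinfun_apply_id_blinfun zero_blinfun.rep_eq)
  then show False using nt by blast
qed

lemma spec_ok:
  assumes rl: "right_linear qr T" and nt: "\<exists>v::'a. v \<noteq> 0"
  shows "S_radius qr T \<ge> 0" "\<And>s. norm s > S_radius qr T \<Longrightarrow> s \<in> S_resolvent qr T"
proof -
  have ne: "norm ` S_spectrum qr T \<noteq> {}" using spec_nonempty[OF rl nt] by simp
  have bdd: "bdd_above (norm ` S_spectrum qr T)"
  proof (rule bdd_aboveI[of _ "3 * norm T + 1"])
    fix x assume "x \<in> norm ` S_spectrum qr T"
    then obtain s where "s \<in> S_spectrum qr T" "x = norm s" by blast
    then show "x \<le> 3 * norm T + 1" using bdd_res[OF rl, of s] by (force simp: S_spectrum_def)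
  qed
  obtain s0 where s0: "s0 \<in> S_spectrum qr T" using spec_nonempty[OF rl nt] by blast
  have "norm s0 \<le> S_radius qr T" unfolding S_radius_def by (rule cSup_upper[OF _ bdd]) (use s0 in auto)
  then show "S_radius qr T \<ge> 0" using norm_ge_zero[of s0] by linarith
  fix s :: quat assume ns: "norm s > S_radius qr T"
  show "s \<in> S_resolvent qr T"
  proof (rule ccontr)
    assume "s \<notin> S_resolvent qr T"
    then have "s \<in> S_spectrum qr T" by (simp add: S_spectrum_def)
    then have "norm s \<le> S_radius qr T" unfolding S_radius_def by (intro cSup_upper[OF _ bdd]) auto
    then show False using ns by simp
  qed
qed

lemma decay:
  assumes rl: "right_linear qr T" and nt: "\<exists>v::'a. v \<noteq> 0" and ns: "norm s > S_radius qr T"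
  shows "\<exists>r M. r * norm s > 1 \<and> (\<forall>k. r ^ k * norm (bpow T k) \<le> M)"
proof -
  define R where "R = S_radius qr T"
  have R0: "R \<ge> 0" using spec_ok(1)[OF rl nt] by (simp add: R_def)
  have ns': "norm s > R" using ns by (simp add: R_def)
  have c: "\<And>z. T o\<^sub>L J z = J z o\<^sub>L T" using rl_J_comm[OF rl] by blast
  define r0 where "r0 = 2 / (norm s + R)"
  define r where "r = (1 / norm s + r0) / 2"
  have nsp: "norm s > 0" using ns' R0 by linarith
  have r0g: "1 / norm s < r0" unfolding r0_def using ns' R0 nsp by (simp add: field_simps)
  have p: "1 / norm s > 0" using nsp by simp
  have rr1: "0 \<le> r" unfolding r_def using p r0g by (simp add: field_simps)
  have rr2: "r < r0" unfolding r_def using p r0g by (simp add: field_simps)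
  have rr3: "1 / norm s < r" unfolding r_def using p r0g by (simp add: field_simps)
  note rr = rr1 rr2 rr3
  have inv: "\<exists>B. inv2 (id_blinfun - (J \<mu> o\<^sub>L T)) B" if "cmod \<mu> \<le> r0" for \<mu>
  proof (cases "\<mu> = 0")
    case True then show ?thesis using inv2_id by (auto simp: J_zero)
  next
    case False
    have "R < (norm s + R) / 2" using ns' by simp
    also have "(norm s + R) / 2 = 1 / r0" by (simp add: r0_def)
    also have "1 / r0 \<le> 1 / cmod \<mu>"
    proof -
      have "norm s + R > 0" using nsp R0 by linarith
      then have "r0 > 0" by (simp add: r0_def)
      then show ?thesis using that False by (intro divide_left_mono) auto
    qed
    also have "1 / cmod \<mu> = norm (cq (inverse \<mu>))" by (simp add: norm_cq norm_inverse divide_inverse)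
    finally have "cq (inverse \<mu>) \<in> S_resolvent qr T" using spec_ok(2)[OF rl nt] by (simp add: R_def)
    then obtain B where "inv2 (T - J (inverse \<mu>)) B" using lam_inv[OF rl] by blast
    then show ?thesis using mu_inv[OF False] by blast
  qed
  have "(\<lambda>k. r ^ k * norm (bpow T k)) \<longlonglongrightarrow> 0" by (rule rickart[OF c inv rr(1,2)])
  then have "Bseq (\<lambda>k. r ^ k * norm (bpow T k))" by (intro convergent_imp_Bseq convergentI)
  then obtain M where "\<forall>k. norm (r ^ k * norm (bpow T k)) \<le> M" by (auto simp: Bseq_def)
  then have "\<forall>k. r ^ k * norm (bpow T k) \<le> M" by (metis abs_le_D1 real_norm_def)
  moreover have "r * norm s > 1" using rr(3) nsp by (simp add: field_simps)
  ultimately show ?thesis by blast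
qed

end

locale qbs = qb +
  fixes T :: "'a \<Rightarrow>\<^sub>L 'a" and s :: quat
  assumes rl: "right_linear qr T" and nt: "\<exists>v::'a. v \<noteq> 0" and ns: "norm s > S_radius qr T"
begin

definition tm :: "nat \<Rightarrow> nat \<Rightarrow> 'a \<Rightarrow>\<^sub>L 'a" where
  "tm n m = real ((m + n - 1) choose (n - 1)) *\<^sub>R (bpow T m o\<^sub>L lmul ql (inverse s ^ (m + n)))"

definition SS :: "nat \<Rightarrow> 'a \<Rightarrow>\<^sub>L 'a" where
  "SS n = (if n = 0 then id_blinfun else suminf (tm n))"

definition PP :: "nat \<Rightarrow> 'a \<Rightarrow>\<^sub>L 'a" where
  "PP n = (\<Sum>m\<le>n. real (n choose m) *\<^sub>R (bpow (- T) m o\<^sub>L lmul ql (cnj_quat s ^ (n - m))))"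

lemma s_pos: "norm s > 0"
  using spec_ok(1)[OF rl nt] ns by linarith

lemma s_ne: "s \<noteq> 0" using s_pos by auto

lemma tm_summable: assumes n: "n > 0" shows "summable (tm n)"
proof -
  obtain r M where rM: "r * norm s > 1" "\<And>k. r ^ k * norm (bpow T k) \<le> M"
    using decay[OF rl nt ns] by blast
  have r: "r > 0"
  proof (rule ccontr)
    assume "\<not> r > 0"
    then have "r * norm s \<le> 0" using s_pos by (simp add: mult_nonpos_nonneg)
    then show False using rM(1) by simp
  qed
  define q where "q = 1 / (r * norm s)"
  have q: "0 \<le> q" "q < 1" using rM(1) r s_pos by (auto simp: q_def field_simps)
  have sb: "summable (\<lambda>m. (M / norm s ^ n) * (real ((m + n - 1) choose (n - 1)) * q ^ m))"
    by (rule summable_mult[OF summable_binom_geo[OF n q]])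
  show ?thesis
  proof (rule summable_comparison_test'[OF sb])
    fix m :: nat
    have nT: "norm (bpow T m) \<le> M / r ^ m" using rM(2)[of m] r by (simp add: field_simps)
    have nz: "norm (lmul ql (inverse s ^ (m + n))) \<le> (1 / norm s) ^ (m + n)"
      using norm_lmul[of "inverse s ^ (m + n)"] s_ne
      by (simp add: quat_norm_power quat_norm_inverse divide_inverse power_inverse)
    have "norm (tm n m) \<le> real ((m + n - 1) choose (n - 1)) * (norm (bpow T m) * norm (lmul ql (inverse s ^ (m + n))))"
      unfolding tm_def by (simp add: mult_left_mono norm_blinfun_compose)
    also have "\<dots> \<le> real ((m + n - 1) choose (n - 1)) * ((M / r ^ m) * (1 / norm s) ^ (m + n))"
      using nT nz order_trans[OF norm_ge_zero nT] by (intro mult_left_mono mult_mono) auto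
    also have "\<dots> = (M / norm s ^ n) * (real ((m + n - 1) choose (n - 1)) * q ^ m)"
      using r s_pos by (simp add: q_def power_add field_simps power_mult_distrib)
    finally show "norm (tm n m) \<le> (M / norm s ^ n) * (real ((m + n - 1) choose (n - 1)) * q ^ m)" .
  qed
qed

lemma tm_sums: "n > 0 \<Longrightarrow> tm n sums SS n"
  using tm_summable by (simp add: SS_def summable_sums)

lemma zs: "inverse s ^ Suc k * s = inverse s ^ k"
  unfolding power_Suc2 mult.assoc quat_inverse_mult[OF s_ne] by simp

lemma zs': "inverse s * inverse s ^ k * s = inverse s ^ k"
  using zs[of k] by (simp only: power_Suc)

lemma D1: "(T o\<^sub>L SS (Suc n)) - (SS (Suc n) o\<^sub>L lmul ql s) = - SS n"
proof -
  define S where "S = SS (Suc n)"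
  have S: "tm (Suc n) sums S" unfolding S_def by (rule tm_sums) simp
  define u where "u m = (if m = 0 then 0 else T o\<^sub>L tm (Suc n) (m - 1))" for m
  have "(\<lambda>m. u (Suc m)) sums (T o\<^sub>L S)" unfolding u_def using sums_cL_left[OF S] by simp
  then have "u sums ((T o\<^sub>L S) + u 0)" by (simp only: sums_Suc_iff)
  then have U: "u sums (T o\<^sub>L S)" by (simp add: u_def)
  have V: "(\<lambda>m. tm (Suc n) m o\<^sub>L lmul ql s) sums (S o\<^sub>L lmul ql s)" by (rule sums_cL_right[OF S])
  define w where "w m = (if n = 0 then (if m = 0 then id_blinfun else 0) else tm n m)" for m
  have W: "(\<lambda>m. (tm (Suc n) m o\<^sub>L lmul ql s) - u m) sums ((S o\<^sub>L lmul ql s) - (T o\<^sub>L S))"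
    by (rule sums_diff[OF V U])
  have eq: "(tm (Suc n) m o\<^sub>L lmul ql s) - u m = w m" for m
  proof (cases m)
    case 0
    have zq: "inverse s ^ (0 + Suc n) * s = inverse s ^ n" by (simp only: add_0 zs)
    have "tm (Suc n) 0 o\<^sub>L lmul ql s = lmul ql (inverse s ^ n)"
      unfolding tm_def cL_scale1 cL_assoc lmul_mult[symmetric] zq by simp
    then show ?thesis using 0 by (simp add: u_def w_def tm_def lmul_one)
  next
    case (Suc j)
    have zq: "inverse s ^ (Suc j + Suc n) * s = inverse s ^ (Suc j + n)" by (simp only: add_Suc_right zs)
    have a: "tm (Suc n) (Suc j) o\<^sub>L lmul ql s =
        real (Suc j + n choose n) *\<^sub>R (bpow T (Suc j) o\<^sub>L lmul ql (inverse s ^ (Suc j + n)))"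
      unfolding tm_def cL_scale1 cL_assoc lmul_mult[symmetric] zq by simp
    have b: "u (Suc j) = real (j + n choose n) *\<^sub>R (bpow T (Suc j) o\<^sub>L lmul ql (inverse s ^ (Suc j + n)))"
      by (simp add: u_def tm_def cL_scale2 bpow_Suc cL_assoc)
    show ?thesis
    proof (cases n)
      case 0
      then show ?thesis using a b Suc by (simp add: w_def)
    next
      case (Suc n')
      have "Suc j + n choose n = (j + n choose n') + (j + n choose n)"
        using Suc by simp
      then have "real (Suc j + n choose n) - real (j + n choose n) = real (j + n choose n')" by simp
      then have c: "real (Suc j + n choose n) - real (j + n choose n) = real (j + n choose n')" by simp
      have wm: "w (Suc j) = real (j + n choose n') *\<^sub>R (bpow T (Suc j) o\<^sub>L lmul ql (inverse s ^ (Suc j + n)))"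
        using Suc by (simp add: w_def tm_def)
      show ?thesis unfolding \<open>m = Suc j\<close> a b wm scaleR_diff_left[symmetric] c ..
    qed
  qed
  have "w sums (if n = 0 then id_blinfun else SS n)"
  proof (cases "n = 0")
    case True
    have "(\<lambda>m. if m = 0 then id_blinfun else 0) sums (id_blinfun :: 'a \<Rightarrow>\<^sub>L 'a)"
      using sums_single[of 0 "\<lambda>_. id_blinfun :: 'a \<Rightarrow>\<^sub>L 'a"] by simp
    moreover have "w = (\<lambda>m. if m = 0 then id_blinfun else 0)" using True by (simp add: w_def fun_eq_iff)
    ultimately have "w sums id_blinfun" by (simp only:)
    then show ?thesis using True by simp
  next
    case False
    moreover have "w = tm n" using False by (simp add: w_def fun_eq_iff)
    ultimately have "w sums SS n" using tm_sums[of n] False by (simp only:)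
    then show ?thesis using False by simp
  qed
  then have "(S o\<^sub>L lmul ql s) - (T o\<^sub>L S) = SS n"
  proof -
    have "(\<lambda>m. (tm (Suc n) m o\<^sub>L lmul ql s) - u m) = w" by (rule ext) (rule eq)
    then have "w sums ((S o\<^sub>L lmul ql s) - (T o\<^sub>L S))" using W by simp
    then have "(S o\<^sub>L lmul ql s) - (T o\<^sub>L S) = (if n = 0 then id_blinfun else SS n)"
      using \<open>w sums (if n = 0 then id_blinfun else SS n)\<close> by (rule sums_unique2)
    then show ?thesis by (simp add: SS_def)
  qed
  then show ?thesis by (simp add: S_def algebra_simps)
qed

lemma PP_0: "PP 0 = id_blinfun"
  by (simp add: PP_def lmul_one)

lemma D2: "PP (Suc n) = (PP n o\<^sub>L lmul ql (cnj_quat s)) - (T o\<^sub>L PP n)"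
proof -
  define c where "c = cnj_quat s"
  define a where "a m = ((-1) ^ m) *\<^sub>R (bpow T m o\<^sub>L lmul ql (c ^ (Suc n - m)))" for m
  have P1: "PP (Suc n) = (\<Sum>m\<le>Suc n. real (Suc n choose m) *\<^sub>R a m)"
    unfolding PP_def a_def c_def by (simp add: bpow_uminus cL_scale1)
  have P2: "(\<Sum>m\<le>n. real (n choose m) *\<^sub>R a m) = PP n o\<^sub>L lmul ql c"
    unfolding PP_def cL_sum1
  proof (rule sum.cong[OF refl])
    fix m assume "m \<in> {..n}"
    then have "c ^ (Suc n - m) = c ^ (n - m) * c" by (simp add: Suc_diff_le power_commutes)
    then show "real (n choose m) *\<^sub>R a m =
        real (n choose m) *\<^sub>R (bpow (- T) m o\<^sub>L lmul ql (cnj_quat s ^ (n - m))) o\<^sub>L lmul ql c"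
      by (simp add: a_def c_def bpow_uminus cL_scale1 cL_assoc lmul_mult)
  qed
  have P3: "(\<Sum>m\<le>n. real (n choose m) *\<^sub>R a (Suc m)) = - (T o\<^sub>L PP n)"
    unfolding PP_def cL_sum2 sum_negf[symmetric]
  proof (rule sum.cong[OF refl])
    fix m assume "m \<in> {..n}"
    show "real (n choose m) *\<^sub>R a (Suc m) =
        - (T o\<^sub>L real (n choose m) *\<^sub>R (bpow (- T) m o\<^sub>L lmul ql (cnj_quat s ^ (n - m))))"
      by (simp add: a_def c_def bpow_uminus cL_scale1 cL_scale2 bpow_Suc cL_assoc)
  qed
  show ?thesis unfolding P1 pascal_sum P2 P3 c_def by simp
qed

lemma D3: "Qop s T o\<^sub>L X = (T o\<^sub>L ((T o\<^sub>L X) - (X o\<^sub>L lmul ql s))) - (((T o\<^sub>L X) - (X o\<^sub>L lmul ql s)) o\<^sub>L lmul ql (cnj_quat s))"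
proof -
  have 1: "lmul ql s + lmul ql (cnj_quat s) = (2 * qRe s) *\<^sub>R id_blinfun"
    unfolding lmul_add[symmetric] quat_add_cnj lmul_real ..
  have 2: "lmul ql s o\<^sub>L lmul ql (cnj_quat s) = (norm s)\<^sup>2 *\<^sub>R id_blinfun"
    unfolding lmul_mult[symmetric] quat_mult_cnj lmul_real ..
  have 3: "(T o\<^sub>L (X o\<^sub>L lmul ql s)) + (T o\<^sub>L (X o\<^sub>L lmul ql (cnj_quat s))) = (2 * qRe s) *\<^sub>R (T o\<^sub>L X)"
    unfolding cL_add2[symmetric] 1 by (simp add: cL_simps)
  have 4: "X o\<^sub>L lmul ql s o\<^sub>L lmul ql (cnj_quat s) = (norm s)\<^sup>2 *\<^sub>R X"
    unfolding cL_assoc 2 by (simp add: cL_simps)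
  have "(T o\<^sub>L ((T o\<^sub>L X) - (X o\<^sub>L lmul ql s))) - (((T o\<^sub>L X) - (X o\<^sub>L lmul ql s)) o\<^sub>L lmul ql (cnj_quat s))
     = (T o\<^sub>L T o\<^sub>L X) - ((T o\<^sub>L (X o\<^sub>L lmul ql s)) + (T o\<^sub>L (X o\<^sub>L lmul ql (cnj_quat s))))
       + (X o\<^sub>L lmul ql s o\<^sub>L lmul ql (cnj_quat s))"
    by (simp add: cL_diff1 cL_diff2 cL_assoc algebra_simps)
  also have "\<dots> = Qop s T o\<^sub>L X"
    unfolding 3 4 Qop_eq by (simp add: cL_simps)
  finally show ?thesis by simp
qed

lemma Q_T: "Qop s T o\<^sub>L T = T o\<^sub>L Qop s T"
  unfolding Qop_eq by (simp add: cL_simps cL_assoc)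

lemma main_id: "bpow (Qop s T) n o\<^sub>L SS n = PP n"
proof (induction n)
  case 0 then show ?case by (simp add: SS_def PP_0)
next
  case (Suc n)
  define Q where "Q = Qop s T"
  have QT: "bpow Q n o\<^sub>L T = T o\<^sub>L bpow Q n"
    using bpow_comm[of T Q n] Q_T by (simp add: Q_def)
  have "bpow Q (Suc n) o\<^sub>L SS (Suc n) = bpow Q n o\<^sub>L (Q o\<^sub>L SS (Suc n))"
    by (simp add: bpow_Suc' cL_assoc)
  also have "Q o\<^sub>L SS (Suc n) = (T o\<^sub>L (- SS n)) - ((- SS n) o\<^sub>L lmul ql (cnj_quat s))"
    unfolding Q_def D3 D1 ..
  also have "bpow Q n o\<^sub>L \<dots> = ((bpow Q n o\<^sub>L SS n) o\<^sub>L lmul ql (cnj_quat s)) - (T o\<^sub>L (bpow Q n o\<^sub>L SS n))"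
    by (simp add: cL_simps flip: cL_assoc QT)
  also have "\<dots> = PP (Suc n)" using Suc by (simp add: Q_def D2)
  finally show ?case by (simp add: Q_def)
qed

lemma final: "n > 0 \<Longrightarrow> tm n sums SL_neg ql n s T"
proof -
  assume n: "n > 0"
  obtain W where W: "inv2 (Qop s T) W" using res_inv spec_ok(2)[OF rl nt ns] by blast
  have "SL_neg ql n s T = bpow W n o\<^sub>L PP n"
    unfolding SL_neg_def PP_def inv2_binv[OF W] ..
  also have "\<dots> = SS n"
    unfolding main_id[symmetric] cL_assoc[symmetric] inv2_bpow[OF W] by simp
  finally show ?thesis using tm_sums[OF n] by simp
qed

end

theorem lemma3p6:
  fixes ql :: "quat \<Rightarrow> 'a::banach \<Rightarrow> 'a" and qr :: "'a \<Rightarrow> quat \<Rightarrow> 'a"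
    and T :: "'a \<Rightarrow>\<^sub>L 'a" and n :: nat and s :: quat
  assumes "two_sided_qbanach ql qr"
    and "right_linear qr T"
    and "n > 0"
    and "norm s > S_radius qr T"
  shows "(\<lambda>m. real ((m + n - 1) choose (n - 1)) *\<^sub>R (bpow T m o\<^sub>L lmul ql (inverse s ^ (m + n))))
           sums SL_neg ql n s T"
proof (cases "\<exists>v::'a. v \<noteq> 0")
  case True
  interpret qbs ql qr T s
    by unfold_locales (use assms True in auto)
  have "tm n sums SL_neg ql n s T" by (rule final) (use assms(3) in simp)
  moreover have "tm n = (\<lambda>m. real ((m + n - 1) choose (n - 1)) *\<^sub>R (bpow T m o\<^sub>L lmul ql (inverse s ^ (m + n))))"
    by (rule ext) (rule tm_def)
  ultimately show ?thesis by (simp only:)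
next
  case False
  then have z: "B = 0" for B :: "'a \<Rightarrow>\<^sub>L 'a" by (auto intro: blinfun_eqI)
  have e1: "(\<lambda>m. real ((m + n - 1) choose (n - 1)) *\<^sub>R (bpow T m o\<^sub>L lmul ql (inverse s ^ (m + n)))) = (\<lambda>m. 0)"
    by (rule ext) (rule z)
  have e2: "SL_neg ql n s T = 0" by (rule z)
  show ?thesis unfolding e1 e2 by (rule sums_zero)
qed

end
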